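(* For the Rogers--Szeg\H{o} polynomials, we have \[ \mu_{n,r,s} = \sum_{j=0}^r (-1)^{r-j}\begin{bmatrix} r \\ j \end{bmatrix}_q \begin{bmatrix} n+j \\ s \end{bmatrix}_q q^{\frac{r-j}{2}}q^{\frac{(n+j-s)^2}{2}}, \] where \( \begin{bmatrix} n \\ m \end{bmatrix}_q \) is the \( q \)-binomial coefficient given by \( \begin{bmatrix} n \\ m \end{bmatrix}_q =\frac{(1-q^n)(1-q^{n-1})\cdots(1-q^{n-m+1})}{(1-q^m)(1-q^{m-1})\cdots(1-q)} \).
   Context: Let \( (\Phi_n(z))_{n\ge0} \) be monic orthogonal polynomials on the unit circle (OPUC) with \( \deg\Phi_n=n \), \( \Phi_0=1 \), satisfying Szeg\H{o}'s recurrence \( \Phi_{n+1}(z) = z\Phi_n(z) - \overline{\alpha_n}\Phi_n^*(z) \), where \( \Phi_n^*(z)=z^n\overline{\Phi_n}(1/z) \) is the reverse polynomial and \( (\alpha_n)_{n\ge0} \) are the Verblunsky coefficients with \( |\alpha_n|<1 \). They are orthogonal with respect to the linear functional \( \mathcal{L} \) on Laurent polynomials with \( \mathcal{L}(1)=1 \) and \( \mathcal{L}(\Phi_m(z)\overline{\Phi_n}(1/z))=\kappa_n\delta_{m,n} \), \( \kappa_n>0 \). Define the inner product \( \langle f(z),g(z)\rangle=\mathcal{L}(f(z)\overline{g}(1/z)) \) and, for nonnegative integers \( n,r,s \), the generalized moment \( \mu_{n,r,s}=\langle \Phi_s(z),z^n\Phi_r(z)\rangle/\langle\Phi_s(z),\Phi_s(z)\rangle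 \). For \( q\in(0,1) \), the Rogers--Szeg\H{o} polynomials are the OPUC with Verblunsky coefficients \( \alpha_n=(-1)^nq^{(n+1)/2} \), \( n\ge0 \). *)

theory Defs
  imports Complex_Main "HOL-Computational_Algebra.Polynomial"
begin

text \<open>Reverse polynomial of degree n: star n p (z) = z^n * conj(p)(1/z).\<close>
definition opuc_star :: "nat \<Rightarrow> complex poly \<Rightarrow> complex poly" where
  "opuc_star n p = (\<Sum>k\<le>n. monom (cnj (coeff p (n - k))) k)"

text \<open>Monic OPUC from Verblunsky coefficients via the Szego recurrence.\<close>
fun opuc_Phi :: "(nat \<Rightarrow> complex) \<Rightarrow> nat \<Rightarrow> complex poly" where
  "opuc_Phi \<alpha> 0 = 1"
| "opuc_Phi \<alpha> (Suc n) =
     pCons 0 (opuc_Phi \<alpha> n) - smult (cnj (\<alpha> n)) (opuc_star n (opuc_Phi \<alpha> n))"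

text \<open>A linear functional L on Laurent polynomials is determined by its moments
  c k = L(z^k), k an integer. The inner product <f,g> = L(f(z) conj(g)(1/z)).\<close>
definition opuc_ip :: "(int \<Rightarrow> complex) \<Rightarrow> complex poly \<Rightarrow> complex poly \<Rightarrow> complex" where
  "opuc_ip c f g = (\<Sum>i\<le>degree f. \<Sum>j\<le>degree g.
      coeff f i * cnj (coeff g j) * c (int i - int j))"

definition opuc_mu :: "(int \<Rightarrow> complex) \<Rightarrow> (nat \<Rightarrow> complex) \<Rightarrow> nat \<Rightarrow> nat \<Rightarrow> nat \<Rightarrow> complex" where
  "opuc_mu c \<alpha> n r s =
     opuc_ip c (opuc_Phi \<alpha> s) (monom 1 n * opuc_Phi \<alpha> r) /
     opuc_ip c (opuc_Phi \<alpha> s) (opuc_Phi \<alpha> s)"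

definition rogers_szego_alpha :: "real \<Rightarrow> nat \<Rightarrow> complex" where
  "rogers_szego_alpha q n = complex_of_real ((-1) ^ n * q powr ((real n + 1) / 2))"

definition qbinom :: "real \<Rightarrow> nat \<Rightarrow> nat \<Rightarrow> real" where
  "qbinom q n m = (\<Prod>i<m. 1 - q ^ (n - i)) / (\<Prod>i<m. 1 - q ^ (i + 1))"

end

theory Submission
  imports Defs
begin


definition qF :: "real \<Rightarrow> nat \<Rightarrow> real" where
  "qF q n = (\<Prod>i<n. 1 - q ^ Suc i)"
definition qN :: "real \<Rightarrow> nat \<Rightarrow> nat \<Rightarrow> real" where
  "qN q n k = (\<Prod>i<k. 1 - q ^ (n - i))"

lemma qbinom_NF: "qbinom q n k = qN q n k / qF q k"
  by (simp add: qbinom_def qN_def qF_def)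

lemma qpow_lt1: "0 < (q::real) \<Longrightarrow> q < 1 \<Longrightarrow> q ^ Suc i < 1"
  by (rule power_Suc_less_one)

lemma qF_pos: assumes "0 < q" "q < 1" shows "qF q n > 0"
  unfolding qF_def
proof (rule prod_pos)
  fix i assume "i \<in> {..<n}"
  have "q ^ Suc i < 1" using assms by (rule qpow_lt1)
  then show "0 < 1 - q ^ Suc i" by simp
qed

lemma qF_Suc: "qF q (Suc n) = qF q n * (1 - q ^ Suc n)"
  by (simp add: qF_def)

lemma qN_Suc: "qN q n (Suc k) = qN q n k * (1 - q ^ (n - k))"
  by (simp add: qN_def)

lemma qN_Suc_Suc: "qN q (Suc n) (Suc k) = (1 - q ^ Suc n) * qN q n k"
  unfolding qN_def by (subst prod.lessThan_Suc_shift) simp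

lemma qN_zero: "n < k \<Longrightarrow> qN q n k = 0"
  unfolding qN_def by (rule prod_zero) (auto intro!: bexI[of _ n])

lemma qN_F: "k \<le> n \<Longrightarrow> qN q n k * qF q (n - k) = qF q n"
proof (induction k)
  case 0 then show ?case by (simp add: qN_def)
next
  case (Suc k)
  have e: "n - k = Suc (n - Suc k)" using Suc.prems by simp
  have "qF q (n - k) = qF q (n - Suc k) * (1 - q ^ (n - k))"
    by (subst e, subst qF_Suc) (simp add: e[symmetric])
  then show ?case using Suc by (simp add: qN_Suc mult_ac)
qed



lemma qbinom_0 [simp]: "qbinom q n 0 = 1"
  by (simp add: qbinom_def)

lemma qbinom_gt: "n < k \<Longrightarrow> qbinom q n k = 0"
  by (simp add: qbinom_NF qN_zero)

lemma qbinom_fact: assumes "0 < q" "q < 1" "k \<le> n"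
  shows "qbinom q n k = qF q n / (qF q k * qF q (n - k))"
proof -
  have "qF q (n-k) > 0" "qF q k > 0" using qF_pos assms by auto
  then show ?thesis using qN_F[OF assms(3), of q] by (simp add: qbinom_NF field_simps)
qed

lemma qbinom_nn [simp]: assumes "0 < q" "q < 1" shows "qbinom q n n = 1"
proof -
  have "qF q n > 0" using qF_pos[OF assms] by auto
  then show ?thesis using qbinom_fact[OF assms, of n n] by (simp add: qF_def[of q 0])
qed



lemma qbinom_sym: assumes "0 < q" "q < 1" "k \<le> n"
  shows "qbinom q n (n - k) = qbinom q n k"
proof -
  have "n - (n - k) = k" using assms by simp
  then show ?thesis using qbinom_fact[OF assms(1,2), of "n-k" n] qbinom_fact[OF assms]
    by (simp add: mult.commute)
qed


lemma qbinom_pascal: assumes "0 < q" "q < 1"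
  shows "qbinom q (Suc r) (Suc k) = qbinom q r k + q ^ Suc k * qbinom q r (Suc k)"
proof -
  have F: "qF q k > 0" "1 - q ^ Suc k > 0" using qF_pos[OF assms] assms
    by (auto simp: qpow_lt1 simp del: power_Suc)
  have key: "(1 - q ^ Suc r) * qN q r k = qN q r k * (1 - q ^ Suc k) + q ^ Suc k * (qN q r k * (1 - q ^ (r - k)))"
  proof (cases "k \<le> r")
    case True
    then have "q ^ Suc k * q ^ (r - k) = q ^ Suc r"
    proof -
      have "Suc k + (r - k) = Suc r" using True by simp
      then show ?thesis by (metis power_add)
    qed
    then show ?thesis by (auto simp: algebra_simps)
  next
    case False then show ?thesis by (simp add: qN_zero)
  qed
  show ?thesis
    unfolding qbinom_NF qF_Suc qN_Suc_Suc qN_Suc[of q r k] using F key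
    by (simp add: field_simps)
qed

lemma qbinom_prod: assumes "0 < q" "q < 1" "k \<le> t" "t \<le> m"
  shows "qbinom q m t * qbinom q t k = qbinom q m k * qbinom q (m - k) (t - k)"
proof -
  have P: "\<And>n. qF q n > 0" using qF_pos[OF assms(1,2)] by auto
  have e: "m - k - (t - k) = m - t" using assms by simp
  show ?thesis using assms P[of m] P[of t] P[of k] P[of "m-t"] P[of "t-k"] P[of "m-k"]
    unfolding qbinom_fact[OF assms(1,2) assms(3)] qbinom_fact[OF assms(1,2) assms(4)] 
      qbinom_fact[OF assms(1,2) order_trans[OF assms(3,4)]] qbinom_fact[OF assms(1,2) diff_le_mono[OF assms(4)]] e
    by (simp add: divide_simps)
qed



lemma gauss_qbinom:
  fixes p q x :: real
  assumes q: "q = p^2" "0 < q" "q < 1"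
  shows "(\<Sum>u\<le>N. qbinom q N u * (-1)^u * p^(u*(u-1)) * x^u) = (\<Prod>i<N. 1 - x * q^i)"
proof (induction N arbitrary: x)
  case 0 then show ?case by simp
next
  case (Suc N)
  define g where "g N x u = qbinom q N u * (-1)^u * p^(u*(u-1)) * x^u" for N x u
  have IH: "(\<Sum>u\<le>N. g N y u) = (\<Prod>i<N. 1 - y * q^i)" for y using Suc.IH unfolding g_def .
  have ex: "p ^ (Suc u * u) = p^(u*(u-1)) * q^u" for u
  proof -
    have "Suc u * u = u*(u-1) + 2*u" by (cases u) auto
    then have "p ^ (Suc u * u) = p^(u*(u-1)) * p^(2*u)" by (simp only: power_add)
    then show ?thesis by (simp add: power_mult q(1))
  qed
  have ex': "p ^ (u + u*u) = q^u * p^(u*u - u)" for u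
    using ex[of u] by (simp add: diff_mult_distrib2 mult.commute)
  have "(\<Sum>u\<le>Suc N. g (Suc N) x u) = g (Suc N) x 0 + (\<Sum>u\<le>N. g (Suc N) x (Suc u))"
    by (rule sum.atMost_Suc_shift)
  also have "(\<Sum>u\<le>N. g (Suc N) x (Suc u)) =
     (\<Sum>u\<le>N. - x * g N (q*x) u) + (\<Sum>u\<le>N. q^Suc u * qbinom q N (Suc u) * (-1)^Suc u * p^(Suc u * u) * x^Suc u)"
    unfolding g_def qbinom_pascal[OF q(2,3)] sum.distrib[symmetric]
    by (rule sum.cong) (simp_all add: ex' algebra_simps power_mult_distrib)
  also have "g (Suc N) x 0 + ((\<Sum>u\<le>N. - x * g N (q*x) u) + (\<Sum>u\<le>N. q^Suc u * qbinom q N (Suc u) * (-1)^Suc u * p^(Suc u * u) * x^Suc u))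
     = (\<Sum>u\<le>N. - x * g N (q*x) u) + (\<Sum>u\<le>Suc N. q^u * qbinom q N u * (-1)^u * p^(u*(u-1)) * x^u)"
    by (subst sum.atMost_Suc_shift[where n=N]) (simp add: g_def)
  also have "(\<Sum>u\<le>Suc N. q^u * qbinom q N u * (-1)^u * p^(u*(u-1)) * x^u) = (\<Sum>u\<le>N. g N (q*x) u)"
    by (simp add: qbinom_gt g_def power_mult_distrib algebra_simps)
  also have "(\<Sum>u\<le>N. - x * g N (q*x) u) + (\<Sum>u\<le>N. g N (q*x) u) = (1 - x) * (\<Prod>i<N. 1 - (q*x) * q^i)"
  proof -
    have "(\<Sum>u\<le>N. - x * g N (q*x) u) = - x * (\<Sum>u\<le>N. g N (q*x) u)" by (simp add: sum_distrib_left)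
    then show ?thesis by (simp add: IH[of "q*x"] algebra_simps)
  qed
  also have "\<dots> = (\<Prod>i<Suc N. 1 - x * q^i)"
    by (subst prod.lessThan_Suc_shift) (simp add: algebra_simps)
  finally show ?case unfolding g_def .
qed



lemma gauss_zero:
  fixes p q :: real
  assumes q: "q = p^2" "0 < q" "q < 1" and N: "1 \<le> N"
  shows "(\<Sum>u\<le>N. qbinom q N u * (-1)^u * p^((N-u)^2 + u)) = 0"
proof -
  define x where "x = inverse (q^(N-1))"
  have qN0: "q^(N-1) \<noteq> 0" using q by simp
  have xq: "x * q^(N-1) = 1" using qN0 by (simp add: x_def)
  have tm: "p^((N-u)^2 + u) = p^(N^2) * (p^(u*(u-1)) * x^u)" if u: "u \<le> N" for u
  proof -
    obtain d where d: "N = u + d" using u le_Suc_ex by blast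
    have e: "(N-u)^2 + u + 2*(u*(N-1)) = N^2 + u*(u-1)"
      using N unfolding d by (cases u) (auto simp: power2_eq_square algebra_simps)
    have "p^((N-u)^2 + u) = p^((N-u)^2 + u) * (x * q^(N-1))^u" using xq by simp
    also have "\<dots> = p^((N-u)^2 + u + 2*(u*(N-1))) * x^u"
    proof -
      have qq: "(q^(N-1))^u = p^(2*(u*(N-1)))" unfolding q(1) power_mult[symmetric] by (simp add: mult_ac)
      show ?thesis by (simp only: power_mult_distrib qq power_add) (simp add: mult_ac)
    qed
    also have "\<dots> = p^(N^2) * (p^(u*(u-1)) * x^u)" unfolding e by (simp add: power_add)
    finally show ?thesis .
  qed
  have "(\<Sum>u\<le>N. qbinom q N u * (-1)^u * p^((N-u)^2 + u)) =
      p^(N^2) * (\<Sum>u\<le>N. qbinom q N u * (-1)^u * p^(u*(u-1)) * x^u)"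
    unfolding sum_distrib_left
  proof (rule sum.cong)
    fix u assume "u \<in> {..N}"
    then show "qbinom q N u * (-1)^u * p^((N-u)^2 + u) = p^(N^2) * (qbinom q N u * (-1)^u * p^(u*(u-1)) * x^u)"
      by (subst tm) (auto simp: mult_ac)
  qed simp
  also have "\<dots> = p^(N^2) * (\<Prod>i<N. 1 - x * q^i)"
    by (subst gauss_qbinom[OF q]) (rule refl)
  also have "(\<Prod>i<N. 1 - x * q^i) = 0"
    by (rule prod_zero) (use N xq in \<open>auto intro!: bexI[of _ "N-1"]\<close>)
  finally show ?thesis by simp
qed



lemma powr_half_pow: "0 < (q::real) \<Longrightarrow> q powr (real k / 2) = sqrt q ^ k"
proof -
  assume q: "0 < q"
  have "q powr (real k / 2) = (q powr (1/2)) powr real k" by (simp add: powr_powr)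
  also have "\<dots> = sqrt q ^ k" using q by (simp add: powr_half_sqrt powr_realpow)
  finally show ?thesis .
qed

lemma alpha_eq: "0 < q \<Longrightarrow> rogers_szego_alpha q t = complex_of_real ((-1)^t * sqrt q ^ Suc t)"
  unfolding rogers_szego_alpha_def
  using powr_half_pow[of q "Suc t"] by (simp add: add.commute)

lemma coeff_star: "coeff (opuc_star n P) k = (if k \<le> n then cnj (coeff P (n-k)) else 0)"
  unfolding opuc_star_def coeff_sum coeff_monom
  by (auto simp: if_distrib cong: if_cong)

definition phic :: "real \<Rightarrow> nat \<Rightarrow> nat \<Rightarrow> real" where
  "phic q r k = (-1)^(r-k) * qbinom q r k * sqrt q^(r-k)"

lemma Phi_coeff:
  assumes q: "0 < q" "q < 1"
  shows "coeff (opuc_Phi (rogers_szego_alpha q) r) k = complex_of_real (phic q r k)"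
proof (induction r arbitrary: k)
  case 0 then show ?case by (cases k) (auto simp: phic_def qbinom_gt)
next
  case (Suc r)
  let ?p = "sqrt q"
  have pq: "?p^2 = q" using q by simp
  have al: "rogers_szego_alpha q r = complex_of_real ((-1)^r * sqrt q ^ Suc r)" using alpha_eq q by blast
  have st: "coeff (opuc_star r (opuc_Phi (rogers_szego_alpha q) r)) k =
       (if k \<le> r then complex_of_real (phic q r (r-k)) else 0)"
    unfolding coeff_star Suc.IH by simp
  show ?case
  proof (cases k)
    case 0
    then show ?thesis using st q by (simp add: al phic_def)
  next
    case (Suc k')
    have pc: "coeff (pCons 0 (opuc_Phi (rogers_szego_alpha q) r)) k = of_real (phic q r k')"
      using Suc Suc.IH by simp
    show ?thesis
    proof (cases "k' < r")
      case True
      then obtain d where d: "r = Suc (k' + d)" using less_imp_Suc_add by blast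
      have s1: "qbinom q r (r - k) = qbinom q r k" using qbinom_sym[OF q, of k r] True Suc by simp
      have rk: "r - k = d" "r - k' = Suc d" "Suc r - k = Suc d" "r - d = k" using d Suc by auto
      have s1': "qbinom q r d = qbinom q r k" using s1 rk by simp
      have pp: "?p * ?p = q" "?p^k' * ?p^k' = q^k'" using q by (simp_all flip: power_mult_distrib)
      have e: "phic q (Suc r) k = phic q r k' - (-1)^r * ?p^Suc r * phic q r (r - k)"
        unfolding phic_def rk s1' Suc qbinom_pascal[OF q]
        using pp s1'[unfolded d Suc] unfolding d by (simp add: algebra_simps power_add)
      show ?thesis
        using True Suc st pc q by (simp add: al e[unfolded Suc])
    next
      case False
      then show ?thesis using st pc q Suc
        by (cases "k' = r") (auto simp: al phic_def qbinom_gt)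
    qed
  qed
qed



lemma inv_real:
  assumes q: "0 < q" "q < 1"
  shows "(\<Sum>t\<le>m. qbinom q m t * sqrt q^((m-t)^2) * phic q t k) = (if k = m then 1 else 0)"
proof (cases "k \<le> m")
  case False
  then show ?thesis by (auto simp: phic_def qbinom_gt intro!: sum.neutral)
next
  case True
  let ?p = "sqrt q"
  define N where "N = m - k"
  have pq: "q = ?p^2" using q by simp
  have "(\<Sum>t\<le>m. qbinom q m t * ?p^((m-t)^2) * phic q t k) =
        (\<Sum>t\<in>{k..m}. qbinom q m t * ?p^((m-t)^2) * phic q t k)"
    by (rule sum.mono_neutral_right) (auto simp: phic_def qbinom_gt)
  also have "\<dots> = (\<Sum>u\<in>{0..N}. qbinom q m (u+k) * ?p^((m-(u+k))^2) * phic q (u+k) k)"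
    using sum.shift_bounds_cl_nat_ivl[of "\<lambda>t. qbinom q m t * ?p^((m-t)^2) * phic q t k" 0 k N] True
    by (simp add: N_def)
  also have "\<dots> = (\<Sum>u\<le>N. qbinom q m k * (qbinom q N u * (-1)^u * ?p^((N-u)^2 + u)))"
  proof (rule sum.cong)
    fix u assume u: "u \<in> {..N}"
    then have "k \<le> u + k" "u + k \<le> m" using True by (auto simp: N_def)
    from qbinom_prod[OF q this] have pr: "qbinom q m (u + k) * qbinom q (u + k) k = qbinom q m k * qbinom q N u"
      by (simp add: N_def)
    have e: "m - (u+k) = N - u" by (simp add: N_def)
    show "qbinom q m (u+k) * ?p^((m-(u+k))^2) * phic q (u+k) k = qbinom q m k * (qbinom q N u * (-1)^u * ?p^((N-u)^2 + u))"
      unfolding phic_def e using pr by (simp add: power_add algebra_simps)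
  qed (auto simp: atLeast0AtMost)
  also have "\<dots> = (if k = m then 1 else 0)"
  proof (cases "k = m")
    case True then show ?thesis using q by (simp add: N_def)
  next
    case False
    then have "1 \<le> N" using \<open>k \<le> m\<close> by (simp add: N_def)
    from gauss_zero[OF pq q this] False show ?thesis by (simp add: sum_distrib_left[symmetric])
  qed
  finally show ?thesis .
qed



lemma ip_bound:
  assumes "degree f \<le> M" "degree g \<le> K"
  shows "opuc_ip c f g = (\<Sum>i\<le>M. \<Sum>j\<le>K. coeff f i * cnj (coeff g j) * c (int i - int j))"
proof -
  have "opuc_ip c f g = (\<Sum>i\<le>degree f. \<Sum>j\<le>K. coeff f i * cnj (coeff g j) * c (int i - int j))"
    unfolding opuc_ip_def
  proof (rule sum.cong[OF refl])
    fix i show "(\<Sum>j\<le>degree g. coeff f i * cnj (coeff g j) * c (int i - int j)) =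
        (\<Sum>j\<le>K. coeff f i * cnj (coeff g j) * c (int i - int j))"
      by (rule sum.mono_neutral_left) (use assms in \<open>auto simp: coeff_eq_0\<close>)
  qed
  also have "\<dots> = (\<Sum>i\<le>M. \<Sum>j\<le>K. coeff f i * cnj (coeff g j) * c (int i - int j))"
    by (rule sum.mono_neutral_left) (use assms in \<open>auto simp: coeff_eq_0\<close>)
  finally show ?thesis .
qed

lemma ip_zero: "opuc_ip c f 0 = 0"
  by (simp add: opuc_ip_def)

lemma ip_add: "opuc_ip c f (g + h) = opuc_ip c f g + opuc_ip c f h"
proof -
  let ?K = "max (degree g) (degree h)"
  have d: "degree (g + h) \<le> ?K" by (rule degree_add_le) auto
  show ?thesis
    unfolding ip_bound[OF order_refl d, where c=c] ip_bound[OF order_refl max.cobounded1[of "degree g" "degree h"], where c=c]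
      ip_bound[OF order_refl max.cobounded2[of "degree h" "degree g"], where c=c]
    by (simp add: sum.distrib[symmetric] algebra_simps)
qed

lemma ip_smult: "opuc_ip c f (smult a g) = cnj a * opuc_ip c f g"
  unfolding ip_bound[OF order_refl degree_smult_le[of a g], where c=c and f=f] ip_bound[OF order_refl order_refl[of "degree g"], where c=c and f=f]
  by (simp add: sum_distrib_left algebra_simps)

lemma ip_sum: "finite S \<Longrightarrow> opuc_ip c f (\<Sum>x\<in>S. smult (a x) (g x)) = (\<Sum>x\<in>S. cnj (a x) * opuc_ip c f (g x))"
  by (induction S rule: finite_induct) (simp_all add: ip_zero ip_add ip_smult)

lemma Phi_expand:
  assumes q: "0 < q" "q < 1"
  shows "opuc_Phi (rogers_szego_alpha q) r = (\<Sum>k\<le>r. monom (complex_of_real (phic q r k)) k)"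
  by (rule poly_eqI) (auto simp: coeff_sum coeff_monom Phi_coeff[OF q] phic_def qbinom_gt)

lemma inversion:
  assumes q: "0 < q" "q < 1"
  shows "monom 1 m = (\<Sum>t\<le>m. smult (complex_of_real (qbinom q m t * sqrt q^((m-t)^2))) (opuc_Phi (rogers_szego_alpha q) t))"
proof (rule poly_eqI)
  fix k
  have "coeff (\<Sum>t\<le>m. smult (complex_of_real (qbinom q m t * sqrt q^((m-t)^2))) (opuc_Phi (rogers_szego_alpha q) t)) k
     = complex_of_real (\<Sum>t\<le>m. qbinom q m t * sqrt q^((m-t)^2) * phic q t k)"
    by (simp add: coeff_sum Phi_coeff[OF q])
  also have "\<dots> = (if k = m then 1 else 0)" by (simp add: inv_real[OF q])
  finally show "coeff (monom 1 m) k = coeff (\<Sum>t\<le>m. smult (complex_of_real (qbinom q m t * sqrt q^((m-t)^2))) (opuc_Phi (rogers_szego_alpha q) t)) k"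
    by (simp add: coeff_monom)
qed



theorem proposition4p14:
  fixes q :: real and c :: "int \<Rightarrow> complex" and \<kappa> :: "nat \<Rightarrow> real"
    and n r s :: nat
  assumes "0 < q" and "q < 1"
    and "c 0 = 1"
    and "\<And>k. \<kappa> k > 0"
    and "\<And>m k. opuc_ip c (opuc_Phi (rogers_szego_alpha q) m) (opuc_Phi (rogers_szego_alpha q) k)
                 = (if m = k then complex_of_real (\<kappa> k) else 0)"
  shows "opuc_mu c (rogers_szego_alpha q) n r s =
    complex_of_real (\<Sum>j\<le>r. (-1) ^ (r - j) * qbinom q r j * qbinom q (n + j) s
        * q powr ((real r - real j) / 2)
        * q powr ((real (n + j) - real s) ^ 2 / 2))"
proof -
  note q = assms(1,2)
  define Ph where "Ph = opuc_Phi (rogers_szego_alpha q)"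
  define b where "b m t = qbinom q m t * sqrt q^((m-t)^2)" for m t
  have orth: "opuc_ip c (Ph s) (Ph t) = (if s = t then complex_of_real (\<kappa> t) else 0)" for t
    using assms(5) unfolding Ph_def by blast
  have inv: "monom 1 m = (\<Sum>t\<le>m. smult (complex_of_real (b m t)) (Ph t))" for m
    unfolding Ph_def b_def by (rule inversion[OF q])
  have g: "monom 1 n * Ph r = (\<Sum>j\<le>r. smult (complex_of_real (phic q r j)) (monom 1 (n+j)))"
    unfolding Ph_def Phi_expand[OF q] sum_distrib_left
    by (simp add: mult_monom smult_monom)
  have bz: "s > m \<Longrightarrow> b m s = 0" for m by (simp add: b_def qbinom_gt)
  have ipm: "opuc_ip c (Ph s) (monom 1 m) = complex_of_real (b m s * \<kappa> s)" for m
  proof -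
    have "opuc_ip c (Ph s) (monom 1 m) = (\<Sum>t\<le>m. complex_of_real (b m t) * (if s = t then complex_of_real (\<kappa> t) else 0))"
      unfolding inv by (simp add: ip_sum orth)
    also have "\<dots> = complex_of_real (b m s * \<kappa> s)"
      using bz[of m] by (cases "s \<le> m") (auto simp: if_distrib cong: if_cong)
    finally show ?thesis .
  qed
  have num: "opuc_ip c (Ph s) (monom 1 n * Ph r) = complex_of_real ((\<Sum>j\<le>r. phic q r j * b (n+j) s) * \<kappa> s)"
    unfolding g by (simp add: ip_sum ipm sum_distrib_left mult_ac)
  have den: "opuc_ip c (Ph s) (Ph s) = complex_of_real (\<kappa> s)" using orth by simp
  have kp: "\<kappa> s \<noteq> 0" using assms(4)[of s] by simp
  have mu: "opuc_mu c (rogers_szego_alpha q) n r s = complex_of_real (\<Sum>j\<le>r. phic q r j * b (n+j) s)"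
    unfolding opuc_mu_def Ph_def[symmetric] num den using kp by (simp flip: of_real_divide)
  show ?thesis unfolding mu
  proof (rule arg_cong[where f=complex_of_real], rule sum.cong[OF refl])
    fix j assume "j \<in> {..r}"
    then have j: "j \<le> r" by simp
    have p1: "q powr ((real r - real j) / 2) = sqrt q ^ (r - j)"
      using powr_half_pow[OF q(1), of "r-j"] j by (simp add: of_nat_diff)
    show "phic q r j * b (n + j) s = (-1) ^ (r - j) * qbinom q r j * qbinom q (n + j) s
        * q powr ((real r - real j) / 2) * q powr ((real (n + j) - real s) ^ 2 / 2)"
    proof (cases "s \<le> n + j")
      case True
      have p2: "q powr ((real (n + j) - real s) ^ 2 / 2) = sqrt q ^ ((n + j - s)^2)"
        using powr_half_pow[OF q(1), of "(n+j-s)^2"] True by (simp add: of_nat_diff)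
      show ?thesis unfolding p1 p2 phic_def b_def by (simp add: mult_ac)
    next
      case False
      then show ?thesis by (simp add: b_def qbinom_gt)
    qed
  qed
qed


end
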